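(* Let $C$ be an ensemble choice aggregator that respects model choice reversal. Let $y,y'\in Y$ and $z,z'\in S(Y)$ be such that for every $j\in\{1,\dots,m\}$ we have $z_{j,d(y)}>z_{j,d(y')}$ if and only if $z'_{j,d(y)}>z'_{j,d(y')}$. Then $C(\{y,y'\},z)=C(\{y,y'\},z')$.
   Context: Let $Y$ be a nonempty set of labels and $m\ge 2$ an integer (the number of models). For each $j\in\{1,\dots,m\}$ let $S_j(Y)\subseteq\mathbb{R}^{|Y|}$ be a set of score vectors whose coordinates are indexed by labels, and let $S(Y)=\prod_{j=1}^m S_j(Y)$. An element $z\in S(Y)$ is written $z=(z_{j,d(y)})_{j,y}$, where $z_{j,d(y)}$ denotes model $j$'s score for label $y$. An ensemble choice aggregator is a set-valued function $C:(2^Y\setminus\{\emptyset\})\times S(Y)\to 2^Y\setminus\{\emptyset\}$ such that for every nonempty $Y^*\subseteq Y$ and every $z\in S(Y)$: (i) $C(Y^*,z)\subseteq Y^*$; and (ii) for every $y\in Y^*$, if there does not exist $y'\in Y^*$ with $\{y'\}=C(\{y,y'\},z)$, then $y\in C(Y^*,z)$. $C$ respects model choice reversal if for all $y,y'\in Y$ and all $z,z'\in S(Y)$: whenever $y\in C(\{y,y'\},z)$, $y'\notin C(\{y,y'\},z)$, and $y'\in C(\{y,y'\},z')$, there exists $j$ such that $z_{j,d(y)}>z_{j,d(y')}$ and $z'_{j,d(y)}<z'_{j,d(y')}$. *)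

theory Defs
  imports Complex_Main "HOL-Library.FuncSet"
begin

type_synonym 'y profile = "nat \<Rightarrow> 'y \<Rightarrow> real"

definition profiles :: "nat \<Rightarrow> (nat \<Rightarrow> ('y \<Rightarrow> real) set) \<Rightarrow> 'y profile set" where
  "profiles m S = PiE {1..m} S"

definition ensemble_choice_aggregator ::
  "'y set \<Rightarrow> 'y profile set \<Rightarrow> ('y set \<Rightarrow> 'y profile \<Rightarrow> 'y set) \<Rightarrow> bool" where
  "ensemble_choice_aggregator Y SY C \<longleftrightarrow>
     (\<forall>Ys z. Ys \<subseteq> Y \<and> Ys \<noteq> {} \<and> z \<in> SY \<longrightarrow>
        C Ys z \<noteq> {} \<and> C Ys z \<subseteq> Ys \<and>
        (\<forall>y\<in>Ys. \<not> (\<exists>y'\<in>Ys. {y'} = C {y, y'} z) \<longrightarrow> y \<in> C Ys z))"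

definition respects_model_choice_reversal ::
  "nat \<Rightarrow> 'y set \<Rightarrow> 'y profile set \<Rightarrow> ('y set \<Rightarrow> 'y profile \<Rightarrow> 'y set) \<Rightarrow> bool" where
  "respects_model_choice_reversal m Y SY C \<longleftrightarrow>
     (\<forall>y\<in>Y. \<forall>y'\<in>Y. \<forall>z\<in>SY. \<forall>z'\<in>SY.
        y \<in> C {y, y'} z \<and> y' \<notin> C {y, y'} z \<and> y' \<in> C {y, y'} z' \<longrightarrow>
        (\<exists>j\<in>{1..m}. z j y > z j y' \<and> z' j y < z' j y'))"

end

theory Submission
  imports Defs
begin

theorem lemma2:
  fixes Y :: "'y set" and m :: nat and S :: "nat \<Rightarrow> ('y \<Rightarrow> real) set"
    and C :: "'y set \<Rightarrow> 'y profile \<Rightarrow> 'y set"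
    and y y' :: 'y and z z' :: "'y profile"
  assumes "Y \<noteq> {}" and "finite Y" and "m \<ge> 2"
    and "\<And>j. j \<in> {1..m} \<Longrightarrow> S j \<subseteq> Y \<rightarrow>\<^sub>E (UNIV :: real set)"
    and "ensemble_choice_aggregator Y (profiles m S) C"
    and "respects_model_choice_reversal m Y (profiles m S) C"
    and "y \<in> Y" and "y' \<in> Y"
    and "z \<in> profiles m S" and "z' \<in> profiles m S"
    and "\<forall>j\<in>{1..m}. (z j y > z j y') \<longleftrightarrow> (z' j y > z' j y')"
  shows "C {y, y'} z = C {y, y'} z'"
proof -
  have ne: "\<And>w. w \<in> profiles m S \<Longrightarrow> C {y, y'} w \<noteq> {} \<and> C {y, y'} w \<subseteq> {y, y'}"
  proof -
    fix w assume w: "w \<in> profiles m S"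
    have sub: "{y, y'} \<subseteq> Y" "{y, y'} \<noteq> {}" using assms(7,8) by auto
    note E = assms(5)[unfolded ensemble_choice_aggregator_def, rule_format, of "{y, y'}" w]
    have "C {y, y'} w \<noteq> {}" "C {y, y'} w \<subseteq> {y, y'}" using E sub w by simp_all
    then show "C {y, y'} w \<noteq> {} \<and> C {y, y'} w \<subseteq> {y, y'}" by (rule conjI)
  qed
  have key: "False" if "w \<in> profiles m S" "w' \<in> profiles m S"
     "\<forall>j\<in>{1..m}. (w j y > w j y') \<longleftrightarrow> (w' j y > w' j y')"
     "(a = y \<and> b = y') \<or> (a = y' \<and> b = y)" "a \<in> C {y,y'} w" "b \<notin> C {y,y'} w" "b \<in> C {y,y'} w'" for w w' a b
  proof -
    have ab: "{a,b} = {y,y'}" using that(4) by auto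
    have "a \<in> Y" "b \<in> Y" using that(4) assms(7,8) by auto
    note R = assms(6)[unfolded respects_model_choice_reversal_def, rule_format]
    have "\<exists>j\<in>{1..m}. w j a > w j b \<and> w' j a < w' j b"
      apply (rule R[OF \<open>a \<in> Y\<close> \<open>b \<in> Y\<close> that(1,2)])
      using that(5,6,7) ab by simp
    then obtain j where j: "j \<in> {1..m}" "w j a > w j b" "w' j a < w' j b" by blast
    have e: "(w j y > w j y') \<longleftrightarrow> (w' j y > w' j y')" using that(3) j(1) by blast
    from that(4) show False
    proof
      assume "a = y \<and> b = y'" then show False using e j by auto
    next
      assume "a = y' \<and> b = y" then show False using e j by auto
    qed
  qed
  have A: "C {y, y'} w \<subseteq> C {y, y'} w'" if w: "w \<in> profiles m S" "w' \<in> profiles m S"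
    and h1: "\<forall>j\<in>{1..m}. (w j y > w j y') \<longleftrightarrow> (w' j y > w' j y')" for w w'
  proof
    have h2: "\<forall>j\<in>{1..m}. (w' j y > w' j y') \<longleftrightarrow> (w j y > w j y')" using h1 by auto
    fix x assume x: "x \<in> C {y, y'} w"
    show "x \<in> C {y, y'} w'"
    proof (rule ccontr)
      assume nx: "x \<notin> C {y, y'} w'"
      have "x \<in> {y,y'}" using x ne[OF w(1)] by blast
      then obtain u where u: "(x = y \<and> u = y') \<or> (x = y' \<and> u = y)" by blast
      have uc: "u \<in> C {y,y'} w'" using u nx ne[OF w(2)] by blast
      show False
      proof (cases "u \<in> C {y,y'} w")
        case True
        have "(u = y \<and> x = y') \<or> (u = y' \<and> x = y)" using u by blast
        then show False using key[OF w(2,1) h2 _ uc nx x] by blast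
      next
        case False
        then show False using key[OF w(1,2) h1 u x False uc] by blast
      qed
    qed
  qed
  have c1: "\<forall>j\<in>{1..m}. (z' j y > z' j y') \<longleftrightarrow> (z j y > z j y')" using assms(11) by auto
  show ?thesis using A[OF assms(9,10,11)] A[OF assms(10,9) c1] by blast
qed

end
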